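(* Fix an integer $k \ge 2$ and let $(G_n)_{n \ge 0}$ be the $k$-bonacci sequence defined by $G_0 = G_1 = \dots = G_{k-2} = 0$, $G_{k-1} = 1$, and $G_n = \sum_{i=1}^{k} G_{n-i}$ for all $n \ge k$. Define $D_k = 2(k-1)$ and, for $0 \le i \le j \le k-1$, define $$N_{0,0} = -(k-2), \qquad N_{i,i} = 4 - (i+3)(k-i) \ \ (1 \le i \le k-1), \qquad N_{i,j} = 2(i+1)\bigl(j-(k-2)\bigr) \ \ (0 \le i \le k-2,\ i+1 \le j \le k-1).$$ Then for every integer $m \ge 0$, $$\sum_{i=0}^{m} G_i^2 \;=\; \sum_{\substack{0 \le i \le k-1 \\ i \le j \le k-1}} \frac{N_{i,j}}{D_k}\, G_{m+i}\, G_{m+j} \;-\; \frac{N_{k-1,k-1}}{D_k}.$$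
   Context: The numbers $N_{i,j}$ depend on $k$ as well as on $i,j$. Note $N_{k-1,k-1} = 2-k$, so the constant term equals $\frac{k-2}{2(k-1)}$. For $k=2,3,4,5$ the sequence is the Fibonacci, Tribonacci, Tetranacci and Pentanacci sequence respectively. *)

theory Defs
  imports Complex_Main
begin

function kbonacci :: "nat \<Rightarrow> nat \<Rightarrow> int" where
  "kbonacci k n =
     (if n < k - 1 then 0
      else if n = k - 1 then 1
      else (\<Sum>i\<in>{1..k}. if 1 \<le> i \<and> i \<le> n then kbonacci k (n - i) else 0))"
  by auto
termination
  by (relation "measure (\<lambda>(k, n). n)") auto

definition Ncoef :: "nat \<Rightarrow> nat \<Rightarrow> nat \<Rightarrow> int" where
  "Ncoef k i j =
     (if i = 0 \<and> j = 0 then - (int k - 2)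
      else if i = j then 4 - (int i + 3) * (int k - int i)
      else 2 * (int i + 1) * (int j - (int k - 2)))"

definition Dk :: "nat \<Rightarrow> int" where
  "Dk k = 2 * (int k - 1)"

end

theory Submission
  imports Defs
begin

lemma kb_small: "n < k - 1 \<Longrightarrow> kbonacci k n = 0"
  by (subst kbonacci.simps) simp
lemma kb_top: "k \<ge> 1 \<Longrightarrow> kbonacci k (k-1) = 1"
  by (subst kbonacci.simps) simp

lemma kb_rec: assumes "k \<ge> 2" "n \<ge> k"
  shows "kbonacci k n = (\<Sum>d<k. kbonacci k (n - k + d))"
proof -
  have "kbonacci k n = (\<Sum>i\<in>{1..k}. if 1 \<le> i \<and> i \<le> n then kbonacci k (n - i) else 0)"
    using assms by (subst kbonacci.simps) simp
  also have "\<dots> = (\<Sum>i\<in>{1..k}. kbonacci k (n - i))"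
    using assms by (intro sum.cong) auto
  also have "\<dots> = (\<Sum>d<k. kbonacci k (n - k + d))"
    by (rule sum.reindex_bij_witness[where i="\<lambda>d. k - d" and j="\<lambda>i. k - i"]) (use assms in auto)
  finally show ?thesis .
qed

definition Mc :: "(nat \<Rightarrow> nat \<Rightarrow> real) \<Rightarrow> nat \<Rightarrow> nat \<Rightarrow> real" where
  "Mc N i j = (if i = j then N i i else if i < j then N i j / 2 else N j i / 2)"

lemma tri_sq: "(\<Sum>i<n. \<Sum>j\<in>{i..<n}. N i j * x i * x j) = (\<Sum>i<n. \<Sum>j<n. Mc N i j * x i * x j)"
proof (induction n)
  case 0 then show ?case by simp
next
  case (Suc n)
  have L: "(\<Sum>i<Suc n. \<Sum>j\<in>{i..<Suc n}. N i j * x i * x j) =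
        (\<Sum>i<n. \<Sum>j\<in>{i..<n}. N i j * x i * x j) + (\<Sum>i<n. N i n * x i * x n) + N n n * x n * x n"
    by (simp add: sum.distrib)
  have R: "(\<Sum>i<Suc n. \<Sum>j<Suc n. Mc N i j * x i * x j) =
        (\<Sum>i<n. \<Sum>j<n. Mc N i j * x i * x j) + (\<Sum>i<n. Mc N i n * x i * x n)
        + (\<Sum>j<n. Mc N n j * x n * x j) + Mc N n n * x n * x n"
    by (simp add: sum.distrib)
  have "(\<Sum>i<n. Mc N i n * x i * x n) + (\<Sum>j<n. Mc N n j * x n * x j) = (\<Sum>i<n. N i n * x i * x n)"
    by (simp add: sum.distrib[symmetric] Mc_def field_simps)
  then show ?case using L R Suc by (simp add: Mc_def)
qed

lemma shift: fixes M :: "nat \<Rightarrow> nat \<Rightarrow> real" and x :: "nat \<Rightarrow> real" assumes "n = Suc p"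
  shows "(\<Sum>c<n. \<Sum>d<n. M c d * (if c < p then x (Suc c) else (\<Sum>e<n. x e))
                        * (if d < p then x (Suc d) else (\<Sum>e<n. x e))) =
    (\<Sum>c<n. \<Sum>d<n. ((if c \<ge> 1 \<and> d \<ge> 1 then M (c-1) (d-1) else 0) + (if c \<ge> 1 then M (c-1) p else 0)
        + (if d \<ge> 1 then M p (d-1) else 0) + M p p) * x c * x d)"
proof -
  let ?s = "\<Sum>e<n. x e"
  have sh: "\<And>f::nat\<Rightarrow>real. (\<Sum>c<n. if 0 < c then f c else 0) = (\<Sum>c<p. f (Suc c))"
    unfolding assms sum.lessThan_Suc_shift by simp
  have e1: "(\<Sum>c<n. \<Sum>d<n. (if c \<ge> 1 \<and> d \<ge> 1 then M (c-1) (d-1) else 0) * x c * x d)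
     = (\<Sum>c<n. if 0 < c then (\<Sum>d<n. if 0 < d then M (c-1) (d-1) * x c * x d else 0) else 0)"
    by (auto intro!: sum.cong sum.neutral)
  have e2: "(\<Sum>c<n. \<Sum>d<n. (if c \<ge> 1 then M (c-1) p else 0) * x c * x d)
     = (\<Sum>c<n. if 0 < c then (\<Sum>d<n. M (c-1) p * x c * x d) else 0)"
    by (auto intro!: sum.cong sum.neutral)
  have e3: "(\<Sum>c<n. \<Sum>d<n. (if d \<ge> 1 then M p (d-1) else 0) * x c * x d)
     = (\<Sum>d<n. if 0 < d then (\<Sum>c<n. M p (d-1) * x c * x d) else 0)"
    by (subst sum.swap) (auto intro!: sum.cong sum.neutral)
  have "(\<Sum>c<n. \<Sum>d<n. M c d * (if c < p then x (Suc c) else ?s) * (if d < p then x (Suc d) else ?s))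
     = (\<Sum>c<p. \<Sum>d<p. M c d * x (Suc c) * x (Suc d)) + (\<Sum>c<p. M c p * x (Suc c) * ?s)
       + (\<Sum>d<p. M p d * ?s * x (Suc d)) + M p p * ?s * ?s"
    using assms by (simp add: sum.distrib add_ac)
  also have "(\<Sum>c<p. \<Sum>d<p. M c d * x (Suc c) * x (Suc d)) = (\<Sum>c<n. \<Sum>d<n. (if c \<ge> 1 \<and> d \<ge> 1 then M (c-1) (d-1) else 0) * x c * x d)"
    unfolding e1 sh by simp
  also have "(\<Sum>c<p. M c p * x (Suc c) * ?s) = (\<Sum>c<n. \<Sum>d<n. (if c \<ge> 1 then M (c-1) p else 0) * x c * x d)"
    unfolding e2 sh by (simp add: sum_distrib_left sum_distrib_right mult_ac)
  also have "(\<Sum>d<p. M p d * ?s * x (Suc d)) = (\<Sum>c<n. \<Sum>d<n. (if d \<ge> 1 then M p (d-1) else 0) * x c * x d)"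
    unfolding e3 sh by (simp add: sum_distrib_left sum_distrib_right mult_ac)
  also have "M p p * ?s * ?s = (\<Sum>c<n. \<Sum>d<n. M p p * x c * x d)"
    by (simp add: sum_distrib_left sum_distrib_right mult_ac)
  finally show ?thesis by (simp add: sum.distrib[symmetric] algebra_simps)
qed


definition NN :: "nat \<Rightarrow> nat \<Rightarrow> nat \<Rightarrow> real" where
  "NN k i j = of_int (Ncoef k i j)"

lemma pointwise:
  assumes "k \<ge> 2" "c < k" "d < k"
  shows "(if c \<ge> 1 \<and> d \<ge> 1 then Mc (NN k) (c-1) (d-1) else 0) + (if c \<ge> 1 then Mc (NN k) (c-1) (k-1) else 0)
        + (if d \<ge> 1 then Mc (NN k) (k-1) (d-1) else 0) + Mc (NN k) (k-1) (k-1)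
       = Mc (NN k) c d + (if c = 1 \<and> d = 1 then of_int (Dk k) else 0)"
proof -
  obtain q where q: "k = q + 2" using assms by (metis add.commute le_Suc_ex)
  show ?thesis using assms unfolding q
    by (cases c; cases d) (auto simp: Mc_def NN_def Ncoef_def Dk_def field_simps)
qed


declare kbonacci.simps[simp del]

lemma dbl_delta: fixes n a b :: nat assumes "a < n" "b < n"
  shows "(\<Sum>c<n. \<Sum>d<n. (if c = a \<and> d = b then (A c d::real) else 0)) = A a b"
proof -
  have "(\<Sum>c<n. \<Sum>d<n. (if c = a \<and> d = b then A c d else 0)) = (\<Sum>c<n. if c = a then (\<Sum>d<n. if d = b then A c d else 0) else 0)"
    by (intro sum.cong refl) auto
  also have "\<dots> = A a b"
    using assms by (simp add: sum.delta)
  finally show ?thesis .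
qed

definition QQ :: "nat \<Rightarrow> nat \<Rightarrow> real" where
  "QQ k m = (\<Sum>c<k. \<Sum>d<k. Mc (NN k) c d * of_int (kbonacci k (m + c)) * of_int (kbonacci k (m + d)))"

lemma QQ_step:
  assumes "k \<ge> 2"
  shows "QQ k (Suc m) = QQ k m + of_int (Dk k) * (of_int (kbonacci k (Suc m)))^2"
proof -
  define x where "x c = (of_int (kbonacci k (m + c)) :: real)" for c
  define p where "p = k - 1"
  have kp: "k = Suc p" using assms unfolding p_def by simp
  have y: "of_int (kbonacci k (Suc (m + c))) = (if c < p then x (Suc c) else (\<Sum>e<k. x e))" if "c < k" for c
  proof (cases "c < p")
    case True then show ?thesis by (simp add: x_def)
  next
    case False
    then have c: "c = p" using that kp by simp
    have "kbonacci k (Suc (m + c)) = (\<Sum>d<k. kbonacci k (Suc (m + c) - k + d))"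
      using assms c kp by (intro kb_rec) auto
    also have "\<dots> = (\<Sum>d<k. kbonacci k (m + d))" using c kp by simp
    finally show ?thesis using c by (simp add: x_def)
  qed
  have pw: "\<And>c d. (Mc (NN k) c d + (if c = 1 \<and> d = 1 then of_int (Dk k) else 0)) * x c * x d
     = Mc (NN k) c d * x c * x d + (if c = 1 \<and> d = 1 then of_int (Dk k) * x c * x d else 0)" by (simp add: distrib_right)
  have "QQ k (Suc m) = (\<Sum>c<k. \<Sum>d<k. Mc (NN k) c d * (if c < p then x (Suc c) else (\<Sum>e<k. x e))
                        * (if d < p then x (Suc d) else (\<Sum>e<k. x e)))"
    unfolding QQ_def by (intro sum.cong refl) (simp add: y)
  also have "\<dots> = (\<Sum>c<k. \<Sum>d<k. ((if c \<ge> 1 \<and> d \<ge> 1 then Mc (NN k) (c-1) (d-1) else 0) + (if c \<ge> 1 then Mc (NN k) (c-1) p else 0)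
        + (if d \<ge> 1 then Mc (NN k) p (d-1) else 0) + Mc (NN k) p p) * x c * x d)"
    by (rule shift[OF kp])
  also have "\<dots> = (\<Sum>c<k. \<Sum>d<k. (Mc (NN k) c d + (if c = 1 \<and> d = 1 then of_int (Dk k) else 0)) * x c * x d)"
    unfolding p_def by (intro sum.cong refl) (metis pointwise[OF assms] lessThan_iff)
  also have "\<dots> = QQ k m + (\<Sum>c<k. \<Sum>d<k. (if c = 1 \<and> d = 1 then of_int (Dk k) * x c * x d else 0))"
    by (simp only: pw sum.distrib) (simp add: QQ_def x_def)
  also have "(\<Sum>c<k. \<Sum>d<k. (if c = 1 \<and> d = 1 then of_int (Dk k) * x c * x d else 0)) = of_int (Dk k) * x 1 * x 1"
    using assms by (subst dbl_delta) auto
  finally show ?thesis by (simp add: x_def power2_eq_square mult.assoc)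
qed

lemma QQ_0:
  assumes "k \<ge> 2"
  shows "QQ k 0 = NN k (k-1) (k-1)"
proof -
  have x: "of_int (kbonacci k c) = (if c = k - 1 then 1 else (0::real))" if "c < k" for c
    using that kb_small[of c k] kb_top[of k] assms by auto
  have h: "\<And>(a::real) P. a * (if P then 1 else 0) = (if P then a else 0)" by simp
  have "QQ k 0 = (\<Sum>c<k. \<Sum>d<k. Mc (NN k) c d * (if c = k - 1 then 1 else 0) * (if d = k - 1 then 1 else 0))"
    unfolding QQ_def by (intro sum.cong refl) (simp add: x)
  also have "\<dots> = (\<Sum>c<k. if c = k - 1 then (\<Sum>d<k. if d = k - 1 then Mc (NN k) c d else 0) else 0)"
    by (intro sum.cong refl) (simp only: h, auto)
  also have "\<dots> = (\<Sum>d<k. if d = k - 1 then Mc (NN k) (k-1) d else 0)"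
    by (subst sum.delta) (use assms in auto)
  also have "\<dots> = Mc (NN k) (k-1) (k-1)"
    by (subst sum.delta) (use assms in auto)
  finally show ?thesis by (simp add: Mc_def)
qed


lemma sumsq: assumes "k \<ge> 2"
  shows "(\<Sum>i=0..m. (of_int (kbonacci k i) :: real)^2) = QQ k m / of_int (Dk k) - NN k (k-1) (k-1) / of_int (Dk k)"
proof (induction m)
  case 0
  have "kbonacci k 0 = 0" using assms by (intro kb_small) auto
  then show ?case using QQ_0[OF assms] by simp
next
  case (Suc m)
  have D: "of_int (Dk k) \<noteq> (0::real)" using assms by (simp add: Dk_def)
  have "(\<Sum>i=0..Suc m. (of_int (kbonacci k i) :: real)^2) = (\<Sum>i=0..m. (of_int (kbonacci k i) :: real)^2) + (of_int (kbonacci k (Suc m)))^2"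
    by simp
  also have "\<dots> = QQ k m / of_int (Dk k) - NN k (k-1) (k-1) / of_int (Dk k) + (of_int (kbonacci k (Suc m)))^2"
    by (simp add: Suc.IH)
  also have "\<dots> = QQ k (Suc m) / of_int (Dk k) - NN k (k-1) (k-1) / of_int (Dk k)"
    using D by (simp add: QQ_step[OF assms] add_divide_distrib)
  finally show ?case .
qed

theorem mainTheorem1:
  fixes k m :: nat
  assumes "k \<ge> 2"
  shows "(\<Sum>i=0..m. (of_int (kbonacci k i) :: real)^2) =
           (\<Sum>i=0..k-1. \<Sum>j=i..k-1.
               of_int (Ncoef k i j) / of_int (Dk k)
                 * of_int (kbonacci k (m + i)) * of_int (kbonacci k (m + j)))
           - of_int (Ncoef k (k-1) (k-1)) / of_int (Dk k)"
proof -
  have s1: "{0..k-1} = {..<k}" using assms by auto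
  have s2: "\<And>i. {i..k-1} = {i..<k}" using assms by auto
  have "(\<Sum>i=0..k-1. \<Sum>j=i..k-1.
               of_int (Ncoef k i j) / of_int (Dk k)
                 * of_int (kbonacci k (m + i)) * of_int (kbonacci k (m + j)))
      = (\<Sum>i<k. \<Sum>j\<in>{i..<k}. NN k i j * of_int (kbonacci k (m + i)) * of_int (kbonacci k (m + j))) / (of_int (Dk k) :: real)"
    unfolding s1 s2 by (simp add: sum_divide_distrib NN_def atLeast0LessThan)
  also have "\<dots> = QQ k m / of_int (Dk k)"
    unfolding QQ_def by (subst tri_sq) simp
  finally show ?thesis using sumsq[OF assms, of m] by (simp add: NN_def)
qed

end
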